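(* Let $n\ge 1$ and $x,y\in S_n$. Then there exist an integer $N$ with $n\leq N\leq n(n+1)/2$ and permutations $v,w\in S_N$ such that $P(v)=P(w)$, $v(i)=w(i)$ for all $i\leq N-n$, and the pattern of $v$ in the last $n$ positions is $x$ and the pattern of $w$ in the last $n$ positions is $y$.
   Context: Permutations are written in one-line notation. $P(w)$ denotes the Robinson--Schensted insertion tableau of $w\in S_N$, obtained by successively column inserting $w(N),w(N-1),\dots,w(1)$ into the empty tableau (column insertion of $a$: place $a$ in the first column, bumping the smallest entry of that column larger than $a$, if any, which is then inserted into the next column in the same way, and so on). For $x\in S_n$ and $v\in S_N$, the pattern of $v$ in the last $n$ positions is $x$ if for all $1\le i<j\le n$: $v(N-n+i)<v(N-n+j)$ if and only if $x(i)<x(j)$. *)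

theory Defs
  imports Main
begin

text \<open>Permutations of S_N in one-line notation, as lists: the list w represents the
  permutation i \<mapsto> w ! (i - 1) for 1 \<le> i \<le> N.\<close>
definition Sym :: "nat \<Rightarrow> nat list set" where
  "Sym N = {w. length w = N \<and> distinct w \<and> set w = {1..N}}"

text \<open>Tableaux as lists of columns (each column listed top to bottom).\<close>
fun col_insert :: "nat list list \<Rightarrow> nat \<Rightarrow> nat list list" where
  "col_insert [] a = [[a]]"
| "col_insert (c # cs) a =
     (if \<exists>z\<in>set c. a < z
      then (let b = Min {z \<in> set c. a < z}
            in map (\<lambda>z. if z = b then a else z) c # col_insert cs b)
      else (c @ [a]) # cs)"

definition P_tab :: "nat list \<Rightarrow> nat list list" where
  "P_tab w = foldl col_insert [] (rev w)"

definition last_pattern :: "nat \<Rightarrow> nat list \<Rightarrow> nat list \<Rightarrow> bool" where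
  "last_pattern n v x \<longleftrightarrow>
     (\<forall>i j. i < j \<and> j < n \<longrightarrow>
        (v ! (length v - n + i) < v ! (length v - n + j) \<longleftrightarrow> x ! i < x ! j))"

end

theory Submission
  imports Defs
begin

lemma ent_col_insert: "set (concat (col_insert T a)) = insert a (set (concat T))"
proof (induction T arbitrary: a)
  case Nil then show ?case by simp
next
  case (Cons c cs)
  show ?case
  proof (cases "\<exists>z\<in>set c. a < z")
    case True
    define b where "b = Min {z \<in> set c. a < z}"
    have fin: "finite {z \<in> set c. a < z}" by simp
    have bin: "b \<in> set c" using Min_in[OF fin] True b_def by auto
    have "set (map (\<lambda>z. if z = b then a else z) c) = insert a (set c - {b})"
      using bin by auto
    then show ?thesis using True Cons.IH[of b] bin by (auto simp: Let_def b_def[symmetric])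
  qed auto
qed

fun app_col :: "nat \<Rightarrow> nat \<Rightarrow> nat list list \<Rightarrow> nat list list" where
  "app_col k m [] = [[m]]"
| "app_col 0 m (c # cs) = (c @ [m]) # cs"
| "app_col (Suc k) m (c # cs) = c # app_col k m cs"

lemma maxins: assumes a: "\<forall>z\<in>set (concat T). z < m" shows "col_insert T m = app_col 0 m T"
proof (cases T)
  case (Cons c cs)
  have "\<forall>z\<in>set c. z < m" using a Cons by simp
  then have "\<not> (\<exists>z\<in>set c. m < z)" by auto
  then show ?thesis using Cons by simp
next
  case Nil then show ?thesis by simp
qed 

lemma A1:
  assumes "\<forall>z\<in>set (concat T). z < m" "a < m"
  shows "\<exists>k'. col_insert (app_col k m T) a = app_col k' m (col_insert T a)"
  using assms
proof (induction T arbitrary: k a)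
  case Nil
  have "{z. z = m \<and> a < z} = {m}" using Nil by auto
  then show ?case using Nil by (intro exI[of _ 1]) simp
next
  case (Cons c cs)
  have Hc: "\<forall>z\<in>set c. z < m" using Cons.prems by simp
  have Hcs: "\<forall>z\<in>set (concat cs). z < m" using Cons.prems by simp
  have am: "a < m" using Cons.prems by simp
  have mc: "m \<notin> set c" using Hc by blast
  show ?case
  proof (cases k)
    case 0
    show ?thesis
    proof (cases "\<exists>z\<in>set c. a < z")
      case True
      have fin: "finite {z \<in> set c. a < z}" by simp
      have e: "{z \<in> set (c @ [m]). a < z} = insert m {z \<in> set c. a < z}" using am by auto
      define b where "b = Min {z \<in> set c. a < z}"
      have ne: "{z \<in> set c. a < z} \<noteq> {}" using True by blast
      have mi: "b \<in> set c" using Min_in[OF fin ne] b_def by simp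
      then have "b < m" using Hc by blast
      have "Min {z \<in> set (c @ [m]). a < z} = min m b"
        unfolding e b_def using fin ne by (rule Min_insert)
      also have "\<dots> = b" using \<open>b < m\<close> by simp
      finally have M: "Min {z \<in> set (c @ [m]). a < z} = b" .
      have bm: "b \<noteq> m" using \<open>b < m\<close> by simp
      have mp: "map (\<lambda>z. if z = b then a else z) (c @ [m]) = map (\<lambda>z. if z = b then a else z) c @ [m]"
        using bm by simp
      have ex: "\<exists>z\<in>set (c @ [m]). a < z" using am by simp
      have "col_insert (app_col k m (c # cs)) a = (map (\<lambda>z. if z = b then a else z) c @ [m]) # col_insert cs b"
        using 0 M mp ex by (simp only: app_col.simps col_insert.simps if_True Let_def)
      moreover have "col_insert (c # cs) a = map (\<lambda>z. if z = b then a else z) c # col_insert cs b"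
        using True by (simp only: col_insert.simps if_True Let_def b_def)
      ultimately show ?thesis by (intro exI[of _ 0]) simp
    next
      case False
      have e: "{z \<in> set (c @ [m]). a < z} = {m}" using am False by auto
      have mp: "map (\<lambda>z. if z = m then a else z) (c @ [m]) = c @ [a]"
        using mc by (induction c) auto
      have ex: "\<exists>z\<in>set (c @ [m]). a < z" using am by simp
      have "col_insert (app_col k m (c # cs)) a = (c @ [a]) # col_insert cs m"
        using 0 e mp ex by (simp only: app_col.simps col_insert.simps if_True Let_def Min_singleton)
      also have "\<dots> = (c @ [a]) # app_col 0 m cs" using maxins[of cs m] Hcs by simp
      also have "\<dots> = app_col 1 m (col_insert (c # cs) a)" using False by simp
      finally show ?thesis by blast
    qed
  next
    case (Suc j)
    show ?thesis
    proof (cases "\<exists>z\<in>set c. a < z")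
      case True
      define b where "b = Min {z \<in> set c. a < z}"
      have fin: "finite {z \<in> set c. a < z}" by simp
      have ne: "{z \<in> set c. a < z} \<noteq> {}" using True by blast
      have bin: "b \<in> set c" using Min_in[OF fin ne] b_def by simp
      then have "b < m" using Hc by blast
      then obtain k' where k': "col_insert (app_col j m cs) b = app_col k' m (col_insert cs b)"
        using Cons.IH[of b j] Hcs by blast
      have "col_insert (app_col k m (c # cs)) a = map (\<lambda>z. if z = b then a else z) c # col_insert (app_col j m cs) b"
        using Suc True by (simp only: app_col.simps col_insert.simps if_True Let_def b_def)
      also have "\<dots> = app_col (Suc k') m (col_insert (c # cs) a)"
        using k' True by (simp only: app_col.simps col_insert.simps if_True Let_def b_def)
      finally show ?thesis by blast
    next
      case False
      then show ?thesis using Suc by (intro exI[of _ k]) simp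
    qed
  qed
qed

lemma ent_col_insert': "\<Union> (set ` set (col_insert T a)) = insert a (\<Union> (set ` set T))"
  using ent_col_insert[of T a] by simp
lemma A2:
  assumes "\<forall>z\<in>set (concat T). z < m" "\<forall>a\<in>set xs. a < m"
  shows "\<exists>k'. foldl col_insert (app_col k m T) xs = app_col k' m (foldl col_insert T xs)"
  using assms
proof (induction xs arbitrary: T k)
  case Nil then show ?case by auto
next
  case (Cons a xs)
  obtain k' where k': "col_insert (app_col k m T) a = app_col k' m (col_insert T a)"
    using A1[of T m a k] Cons.prems by auto
  have "\<forall>z\<in>set (concat (col_insert T a)). z < m" using Cons.prems by (simp only: ent_col_insert) simp
  then show ?case using Cons.IH[of "col_insert T a" k'] Cons.prems k' by auto
qed

lemma P_tab_append: "P_tab (a @ b) = foldl col_insert (P_tab b) (rev a)"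
  by (simp add: P_tab_def)

lemma ent_P_tab: "set (concat (P_tab l)) = set l"
proof -
  have "set (concat (foldl col_insert T xs)) = set (concat T) \<union> set xs" for T xs
    by (induction xs arbitrary: T) (simp_all add: ent_col_insert')
  then show ?thesis by (simp add: P_tab_def)
qed

abbreviation app2 :: "nat list list \<Rightarrow> nat list \<Rightarrow> nat list list" where
  "app2 G bs \<equiv> map2 (\<lambda>g e. g @ [e]) G bs"

lemma chain:
  "length gs = length es \<Longrightarrow> sorted_wrt (<) (a # es) \<Longrightarrow> \<forall>g\<in>set gs. \<forall>z\<in>set g. z < a \<Longrightarrow>
   col_insert (app2 gs es @ R) a = app2 gs (a # es) @ col_insert R (last (a # es))"
proof (induction gs arbitrary: es a)
  case Nil then show ?case by simp
next
  case (Cons g gs)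
  obtain e es' where es: "es = e # es'" using Cons.prems(1) by (cases es) auto
  have ae: "a < e" using Cons.prems(2) es by simp
  have ga: "\<forall>z\<in>set g. z < a" using Cons.prems(3) by simp
  have e1: "{z \<in> set (g @ [e]). a < z} = {e}" using ga ae by auto
  have ex: "\<exists>z\<in>set (g @ [e]). a < z" using ae by simp
  have eg: "e \<notin> set g" using ga ae by auto
  have mp: "map (\<lambda>z. if z = e then a else z) (g @ [e]) = g @ [a]"
    using eg by (induction g) auto
  have "col_insert (app2 (g # gs) es @ R) a = (g @ [a]) # col_insert (app2 gs es' @ R) e"
    using es e1 ex mp by (simp add: Let_def)
  also have "col_insert (app2 gs es' @ R) e = app2 gs (e # es') @ col_insert R (last (e # es'))"
  proof -
    have "\<forall>g\<in>set gs. \<forall>z\<in>set g. z < e" using Cons.prems(3) ae by (meson list.set_intros(2) less_trans)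
    moreover have "sorted_wrt (<) (e # es')" using Cons.prems(2) es by simp
    moreover have "length gs = length es'" using Cons.prems(1) es by simp
    ultimately show ?thesis using Cons.IH[of es' e] by blast
  qed
  finally show ?case using es by simp
qed

lemma rest_step:
  assumes "\<forall>z\<in>set g. z < e" "e < m" "\<forall>z\<in>set (concat rest). z < m"
  shows "col_insert (app_col j m (g # rest)) e = (g @ [e]) # app_col (j - 1) m rest"
proof (cases j)
  case 0
  have e1: "{z \<in> set (g @ [m]). e < z} = {m}" using assms by auto
  have ex: "\<exists>z\<in>set (g @ [m]). e < z" using assms by simp
  have eg: "m \<notin> set g" using assms by auto
  have mp: "map (\<lambda>z. if z = m then e else z) (g @ [m]) = g @ [e]"
    using eg by (induction g) auto
  have "col_insert (app_col j m (g # rest)) e = (g @ [e]) # col_insert rest m"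
    using 0 e1 ex mp by (simp add: Let_def)
  then show ?thesis using maxins[of rest m] assms 0 by simp
next
  case (Suc i)
  have "\<not> (\<exists>z\<in>set g. e < z)" using assms by auto
  then show ?thesis using Suc by simp
qed

lemma map2_snoc:
  "length es = Suc (length gs) \<Longrightarrow> app2 gs es @ [g @ [last es]] = app2 (gs @ [g]) es"
proof (induction gs arbitrary: es)
  case Nil then show ?case by (cases es) auto
next
  case (Cons h gs)
  then obtain e es' where es: "es = e # es'" by (cases es) auto
  have l: "length es' = Suc (length gs)" using Cons.prems es by simp
  then have "es' \<noteq> []" by auto
  then have "last es = last es'" using es by simp
  then show ?case using Cons.IH[OF l] es by simp
qed

lemma E:
  assumes "length G = L" "length bs = L" "sorted_wrt (<) bs"
    "\<forall>z\<in>set (concat G). \<forall>b\<in>set bs. z < b" "\<forall>b\<in>set bs. b < m" "\<forall>z\<in>set (concat G). z < m"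
  shows "t \<le> L \<Longrightarrow> foldl col_insert (app_col k m G) (rev (drop (L - t) bs)) =
           app2 (take t G) (drop (L - t) bs) @ app_col (k - t) m (drop t G)"
proof (induction t)
  case 0
  then show ?case using assms by simp
next
  case (Suc t)
  define b where "b = bs ! (L - Suc t)"
  define D where "D = drop (L - t) bs"
  have dd: "drop (L - Suc t) bs = b # D"
  proof -
    have "L - Suc t < length bs" using Suc.prems assms(2) by simp
    then have "drop (L - Suc t) bs = bs ! (L - Suc t) # drop (Suc (L - Suc t)) bs"
      by (rule Cons_nth_drop_Suc[symmetric])
    moreover have "Suc (L - Suc t) = L - t" using Suc.prems by simp
    ultimately show ?thesis unfolding b_def D_def by simp
  qed
  have IH: "foldl col_insert (app_col k m G) (rev D) = app2 (take t G) D @ app_col (k - t) m (drop t G)"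
    using Suc D_def by simp
  have lD: "length D = t" using D_def assms Suc.prems by simp
  have srt: "sorted_wrt (<) (b # D)" using assms(3) unfolding dd[symmetric] by (rule sorted_wrt_drop)
  have bset: "set (b # D) \<subseteq> set bs" unfolding dd[symmetric] by (rule set_drop_subset)
  have gb: "\<forall>g\<in>set (take t G). \<forall>z\<in>set g. z < b"
  proof (intro ballI)
    fix g z assume g: "g \<in> set (take t G)" and z: "z \<in> set g"
    have "z \<in> set (concat G)" using in_set_takeD[OF g] z by auto
    moreover have "b \<in> set bs" using bset by auto
    ultimately show "z < b" using assms(4) by blast
  qed
  define e where "e = last (b # D)"
  have eb: "e \<in> set bs" using bset e_def last_in_set[of "b # D"] by auto
  have Gt: "drop t G = G ! t # drop (Suc t) G" using Suc.prems assms(1) by (simp add: Cons_nth_drop_Suc)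
  have G1: "\<forall>z\<in>set (G ! t). z < e"
  proof
    fix z assume "z \<in> set (G ! t)"
    moreover have "G ! t \<in> set G" using Suc.prems assms(1) by simp
    ultimately have "z \<in> set (concat G)" by auto
    then show "z < e" using assms(4) eb by blast
  qed
  have G2: "\<forall>z\<in>set (concat (drop (Suc t) G)). z < m"
  proof
    fix z assume "z \<in> set (concat (drop (Suc t) G))"
    then obtain g where "g \<in> set (drop (Suc t) G)" "z \<in> set g" by auto
    then have "z \<in> set (concat G)" using in_set_dropD by fastforce
    then show "z < m" using assms(6) by blast
  qed
  have s1: "foldl col_insert (app_col k m G) (rev (drop (L - Suc t) bs))
        = col_insert (app2 (take t G) D @ app_col (k - t) m (drop t G)) b"
    using dd IH by simp
  have s2: "col_insert (app2 (take t G) D @ app_col (k - t) m (drop t G)) b = app2 (take t G) (b # D) @ col_insert (app_col (k - t) m (drop t G)) e"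
    unfolding e_def
    by (rule chain) (use lD Suc.prems assms(1) srt gb in auto)
  have em: "e < m" using eb assms(5) by blast
  have s3: "col_insert (app_col (k - t) m (drop t G)) e = (G ! t @ [e]) # app_col (k - Suc t) m (drop (Suc t) G)"
  proof -
    have kk: "k - Suc t = k - t - 1" by simp
    show ?thesis unfolding Gt kk by (rule rest_step[OF G1 em G2])
  qed
  have s4: "app2 (take t G) (b # D) @ [G ! t @ [e]] = app2 (take (Suc t) G) (b # D)"
    unfolding e_def
    using map2_snoc[of "b # D" "take t G" "G ! t"] lD Suc.prems assms(1)
    by (simp add: take_Suc_conv_app_nth)
  have "foldl col_insert (app_col k m G) (rev (drop (L - Suc t) bs)) =
        (app2 (take t G) (b # D) @ [G ! t @ [e]]) @ app_col (k - Suc t) m (drop (Suc t) G)"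
    unfolding s1 s2 s3 by simp
  then have "foldl col_insert (app_col k m G) (rev (drop (L - Suc t) bs)) =
        app2 (take (Suc t) G) (b # D) @ app_col (k - Suc t) m (drop (Suc t) G)"
    unfolding s4 .
  then show ?case using dd by simp
qed

fun tri :: "nat \<Rightarrow> nat" where
  "tri 0 = 0"
| "tri (Suc n) = tri n + Suc n"

lemma tri_Suc: "tri (Suc n) = tri n + Suc n" by simp
declare tri.simps(2)[simp del]

fun U :: "nat \<Rightarrow> nat list" where
  "U 0 = []"
| "U (Suc n) = [Suc (tri n)..<tri (Suc n)] @ U n"

fun F :: "nat \<Rightarrow> nat list list" where
  "F 0 = []"
| "F (Suc n) = app2 (F n) [Suc (tri n)..<tri (Suc n)] @ [[tri (Suc n)]]"

lemma tri_mono: "strict_mono tri"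
  unfolding strict_mono_Suc_iff by (simp add: tri_Suc)

lemma tri_less: "tri i < tri j \<longleftrightarrow> i < j"
  using tri_mono by (simp add: strict_mono_less)

lemma tri_le: "tri i \<le> tri j \<longleftrightarrow> i \<le> j"
  using tri_mono by (simp add: strict_mono_less_eq)

lemma tri_inj: "tri i = tri j \<longleftrightarrow> i = j"
  by (metis tri_le le_antisym order_refl)

lemma tri_ge: "n \<le> tri n"
  by (induction n) (auto simp: tri_Suc)

lemma tri_2: "2 * tri n = n * (n + 1)"
  by (induction n) (auto simp: tri_Suc)

lemma len_F: "length (F n) = n"
  by (induction n) (auto simp: tri_Suc)

lemma set_U: "set (U n) = {z. \<exists>k<n. tri k < z \<and> z < tri (Suc k)}"
proof (induction n)
  case 0 then show ?case by simp
next
  case (Suc n)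
  show ?case
  proof
    show "set (U (Suc n)) \<subseteq> {z. \<exists>k<Suc n. tri k < z \<and> z < tri (Suc k)}"
    proof
      fix z assume "z \<in> set (U (Suc n))"
      then have "z \<in> {Suc (tri n)..<tri (Suc n)} \<or> z \<in> set (U n)" by simp
      then show "z \<in> {z. \<exists>k<Suc n. tri k < z \<and> z < tri (Suc k)}"
      proof
        assume "z \<in> {Suc (tri n)..<tri (Suc n)}"
        then have "tri n < z \<and> z < tri (Suc n)" by simp
        then show ?thesis by blast
      next
        assume "z \<in> set (U n)"
        then obtain k where "k < n" "tri k < z" "z < tri (Suc k)" using Suc.IH by blast
        then show ?thesis by (intro CollectI exI[of _ k]) simp
      qed
    qed
  next
    show "{z. \<exists>k<Suc n. tri k < z \<and> z < tri (Suc k)} \<subseteq> set (U (Suc n))"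
    proof
      fix z assume "z \<in> {z. \<exists>k<Suc n. tri k < z \<and> z < tri (Suc k)}"
      then obtain k where k: "k < Suc n" "tri k < z" "z < tri (Suc k)" by blast
      show "z \<in> set (U (Suc n))"
      proof (cases "k = n")
        case True
        then show ?thesis using k by auto
      next
        case False
        then have "z \<in> set (U n)" using Suc.IH k by auto
        then show ?thesis by simp
      qed
    qed
  qed
qed

lemma U_lt: "z \<in> set (U n) \<Longrightarrow> z < tri n"
proof -
  assume "z \<in> set (U n)"
  then obtain k where "k < n" "z < tri (Suc k)" using set_U by blast
  moreover have "tri (Suc k) \<le> tri n" using \<open>k < n\<close> tri_le[of "Suc k" n] by simp
  ultimately show ?thesis by simp
qed

lemma U_not_tri: "z \<in> set (U n) \<Longrightarrow> z \<noteq> tri j"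
proof
  assume "z \<in> set (U n)" "z = tri j"
  then obtain k where "tri k < tri j" "tri j < tri (Suc k)" using set_U by blast
  then have "k < j" "j < Suc k" using tri_less by blast+
  then show False by simp
qed

lemma U_pos: "z \<in> set (U n) \<Longrightarrow> 1 \<le> z"
  using set_U by fastforce

lemma distinct_U: "distinct (U n)"
proof (induction n)
  case 0 then show ?case by simp
next
  case (Suc n)
  have "\<forall>z\<in>set (U n). z < tri n" using U_lt by blast
  then have "set [Suc (tri n)..<tri (Suc n)] \<inter> set (U n) = {}" by fastforce
  then show ?case using Suc by simp
qed

lemma len_U: "length (U n) + n = tri n"
  by (induction n) (auto simp: tri_Suc)

lemma cover: "z \<le> tri n \<Longrightarrow> 1 \<le> z \<Longrightarrow> (\<exists>k<n. tri k < z \<and> z < tri (Suc k)) \<or> (\<exists>j\<in>{1..n}. z = tri j)"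
proof (induction n)
  case 0 then show ?case by simp
next
  case (Suc n)
  show ?case
  proof (cases "z \<le> tri n")
    case True
    then have "(\<exists>k<n. tri k < z \<and> z < tri (Suc k)) \<or> (\<exists>j\<in>{1..n}. z = tri j)" using Suc by blast
    then show ?thesis by (metis atLeastAtMost_iff le_SucI less_SucI)
  next
    case False
    show ?thesis
    proof (cases "z = tri (Suc n)")
      case True then show ?thesis by (intro disjI2 bexI[of _ "Suc n"]) auto
    next
      case False
      then have "tri n < z \<and> z < tri (Suc n)" using \<open>\<not> z \<le> tri n\<close> Suc.prems by simp
      then show ?thesis by blast
    qed
  qed
qed

lemma set_U_tri: "set (U n) \<union> tri ` {1..n} = {1..tri n}"
proof
  show "set (U n) \<union> tri ` {1..n} \<subseteq> {1..tri n}"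
  proof
    fix z assume "z \<in> set (U n) \<union> tri ` {1..n}"
    then show "z \<in> {1..tri n}"
    proof
      assume "z \<in> set (U n)" then show ?thesis using U_lt U_pos by fastforce
    next
      assume "z \<in> tri ` {1..n}"
      then obtain j where "j \<in> {1..n}" "z = tri j" by blast
      then show ?thesis using tri_le[of j n] tri_ge[of j] by auto
    qed
  qed
next
  show "{1..tri n} \<subseteq> set (U n) \<union> tri ` {1..n}"
  proof
    fix z assume "z \<in> {1..tri n}"
    then have "(\<exists>k<n. tri k < z \<and> z < tri (Suc k)) \<or> (\<exists>j\<in>{1..n}. z = tri j)" using cover by simp
    then show "z \<in> set (U n) \<union> tri ` {1..n}" using set_U by blast
  qed
qed

lemma ent_F: "\<forall>z\<in>set (concat (F n)). z \<le> tri n"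
proof (induction n)
  case 0 then show ?case by simp
next
  case (Suc n)
  show ?case
  proof
    fix z assume z: "z \<in> set (concat (F (Suc n)))"
    have "set (concat (app2 (F n) [Suc (tri n)..<tri (Suc n)])) \<subseteq> set (concat (F n)) \<union> {Suc (tri n)..<tri (Suc n)}"
    proof
      fix y assume "y \<in> set (concat (app2 (F n) [Suc (tri n)..<tri (Suc n)]))"
      then obtain g e where "(g, e) \<in> set (zip (F n) [Suc (tri n)..<tri (Suc n)])" "y \<in> set (g @ [e])" by auto
      then show "y \<in> set (concat (F n)) \<union> {Suc (tri n)..<tri (Suc n)}"
      proof -
        have "g \<in> set (F n)" "e \<in> set [Suc (tri n)..<tri (Suc n)]"
          using \<open>(g, e) \<in> _\<close> by (auto dest: set_zip_leftD set_zip_rightD)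
        then show ?thesis using \<open>y \<in> set (g @ [e])\<close> by auto
      qed
    qed
    moreover have "set (concat (F (Suc n))) = set (concat (app2 (F n) [Suc (tri n)..<tri (Suc n)])) \<union> {tri (Suc n)}"
      by simp
    ultimately have "z \<in> set (concat (F n)) \<union> {Suc (tri n)..<tri (Suc n)} \<or> z = tri (Suc n)" using z by blast
    moreover have "tri n \<le> tri (Suc n)" using tri_le by simp
    ultimately show "z \<le> tri (Suc n)"
    proof (elim disjE UnE)
      assume "z \<in> set (concat (F n))" "tri n \<le> tri (Suc n)"
      then show ?thesis using Suc.IH le_trans by blast
    qed auto
  qed
qed

lemma M: "distinct s \<Longrightarrow> set s = tri ` {1..n} \<Longrightarrow> P_tab (U n @ s) = F n"
proof (induction n arbitrary: s)
  case 0
  then have "s = []" by simp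
  then show ?case by (simp add: P_tab_def)
next
  case (Suc n)
  define m where "m = tri (Suc n)"
  have mins: "m \<in> set s" unfolding m_def Suc.prems(2) by (intro imageI) simp
  obtain s1 s2 where sp: "s = s1 @ m # s2" using split_list[OF mins] by blast
  have dis: "distinct (s1 @ s2)" "m \<notin> set s1" "m \<notin> set s2" using Suc.prems(1) sp by auto
  have "{1..Suc n} = insert (Suc n) {1..n}" by auto
  then have ts: "tri ` {1..Suc n} = insert m (tri ` {1..n})" using m_def by simp
  have mn: "m \<notin> tri ` {1..n}" using m_def tri_inj by auto
  have set12: "set (s1 @ s2) = tri ` {1..n}"
  proof -
    have "set s = insert m (set (s1 @ s2))" using sp by auto
    then show ?thesis using Suc.prems(2) ts dis mn by auto
  qed
  have IH: "P_tab (U n @ s1 @ s2) = F n" using Suc.IH[OF dis(1) set12] .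
  have lt_tri: "\<forall>z\<in>tri ` {1..n}. z < m" using m_def tri_less by auto
  have "\<forall>z\<in>set s2. z < m" using set12 lt_tri by (metis UnCI set_append)
  then have s2m: "\<forall>z\<in>set (concat (P_tab s2)). z < m" by (simp only: ent_P_tab)
  have Um: "\<forall>z\<in>set (U n). z < m" using U_lt m_def by fastforce
  have "\<forall>z\<in>set s1. z < m" using set12 lt_tri by (metis UnCI set_append)
  then have lm: "\<forall>a\<in>set (rev (U n @ s1)). a < m" using Um by auto
  have "P_tab (U n @ s) = foldl col_insert (P_tab (m # s2)) (rev (U n @ s1))"
    using sp P_tab_append[of "U n @ s1" "m # s2"] by simp
  also have "P_tab (m # s2) = app_col 0 m (P_tab s2)"
    using P_tab_append[of "[m]" s2] maxins[OF s2m] by simp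
  finally have "P_tab (U n @ s) = foldl col_insert (app_col 0 m (P_tab s2)) (rev (U n @ s1))" .
  moreover obtain k' where "foldl col_insert (app_col 0 m (P_tab s2)) (rev (U n @ s1)) = app_col k' m (foldl col_insert (P_tab s2) (rev (U n @ s1)))"
    using A2[OF s2m lm] by blast
  moreover have "foldl col_insert (P_tab s2) (rev (U n @ s1)) = F n"
    using IH P_tab_append[of "U n @ s1" s2] by simp
  ultimately have st: "P_tab (U n @ s) = app_col k' m (F n)" by simp
  define bs where "bs = [Suc (tri n)..<tri (Suc n)]"
  have "P_tab (U (Suc n) @ s) = foldl col_insert (P_tab (U n @ s)) (rev bs)"
    using P_tab_append[of bs "U n @ s"] bs_def by simp
  also have "\<dots> = foldl col_insert (app_col k' m (F n)) (rev (drop (n - n) bs))" using st by simp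
  also have "\<dots> = app2 (take n (F n)) (drop (n - n) bs) @ app_col (k' - n) m (drop n (F n))"
  proof (rule E)
    show "length (F n) = n" by (rule len_F)
    show "length bs = n" using bs_def by (simp add: tri_Suc)
    show "sorted_wrt (<) bs" using bs_def by (simp add: sorted_wrt_upt)
    show "\<forall>z\<in>set (concat (F n)). \<forall>b\<in>set bs. z < b" using ent_F[of n] bs_def by fastforce
    show "\<forall>b\<in>set bs. b < m" using bs_def m_def by simp
    have "tri n < m" using m_def tri_less by simp
    then show "\<forall>z\<in>set (concat (F n)). z < m" using ent_F[of n] le_less_trans by blast
  qed simp
  also have "\<dots> = F (Suc n)" using len_F[of n] bs_def m_def by simp
  finally show ?case .
qed

lemma realize:
  assumes "x \<in> Sym n"
  shows "U n @ map tri x \<in> Sym (tri n)" "P_tab (U n @ map tri x) = F n"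
    "last_pattern n (U n @ map tri x) x"
proof -
  have lx: "length x = n" and dx: "distinct x" and sx: "set x = {1..n}" using assms by (auto simp: Sym_def)
  have dm: "distinct (map tri x)" using dx by (simp add: distinct_map inj_on_def tri_inj)
  have sm: "set (map tri x) = tri ` {1..n}" using sx by simp
  have disj: "set (U n) \<inter> set (map tri x) = {}"
  proof -
    { fix z assume z: "z \<in> set (U n)" "z \<in> set (map tri x)"
      then obtain j where "z = tri j" by auto
      with U_not_tri[OF z(1)] have False by blast }
    then show ?thesis by blast
  qed
  have L: "length (U n @ map tri x) = tri n" using len_U[of n] lx by simp
  have D: "distinct (U n @ map tri x)" using distinct_U[of n] dm disj by (simp only: distinct_append)
  have S: "set (U n @ map tri x) = {1..tri n}" using set_U_tri[of n] sm by (simp only: set_append)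
  show "U n @ map tri x \<in> Sym (tri n)"
    unfolding Sym_def using L D S by blast
  show "P_tab (U n @ map tri x) = F n" using M[OF dm sm] .
  show "last_pattern n (U n @ map tri x) x"
    unfolding last_pattern_def
  proof (intro allI impI)
    fix i j assume ij: "i < j \<and> j < n"
    have l: "length (U n @ map tri x) - n = length (U n)" using lx by simp
    have "(U n @ map tri x) ! (length (U n) + i) = tri (x ! i)" using ij lx by (simp add: nth_append)
    moreover have "(U n @ map tri x) ! (length (U n) + j) = tri (x ! j)" using ij lx by (simp add: nth_append)
    ultimately show "((U n @ map tri x) ! (length (U n @ map tri x) - n + i) < (U n @ map tri x) ! (length (U n @ map tri x) - n + j)) = (x ! i < x ! j)"
      unfolding l using tri_less by simp
  qed
qed

theorem proposition2p6:
  fixes n :: nat and x y :: "nat list"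
  assumes "n \<ge> 1" and "x \<in> Sym n" and "y \<in> Sym n"
  shows "\<exists>N v w. n \<le> N \<and> 2 * N \<le> n * (n + 1) \<and> v \<in> Sym N \<and> w \<in> Sym N \<and>
           P_tab v = P_tab w \<and> (\<forall>i < N - n. v ! i = w ! i) \<and>
           last_pattern n v x \<and> last_pattern n w y"
proof (intro exI conjI)
  show "n \<le> tri n" by (rule tri_ge)
  show "2 * tri n \<le> n * (n + 1)" using tri_2 by simp
  show "U n @ map tri x \<in> Sym (tri n)" using realize(1)[OF assms(2)] .
  show "U n @ map tri y \<in> Sym (tri n)" using realize(1)[OF assms(3)] .
  show "P_tab (U n @ map tri x) = P_tab (U n @ map tri y)"
    using realize(2)[OF assms(2)] realize(2)[OF assms(3)] by simp
  show "\<forall>i<tri n - n. (U n @ map tri x) ! i = (U n @ map tri y) ! i"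
  proof (intro allI impI)
    fix i assume "i < tri n - n"
    then have "i < length (U n)" using len_U[of n] by simp
    then show "(U n @ map tri x) ! i = (U n @ map tri y) ! i" by (simp add: nth_append)
  qed
  show "last_pattern n (U n @ map tri x) x" using realize(3)[OF assms(2)] .
  show "last_pattern n (U n @ map tri y) y" using realize(3)[OF assms(3)] .
qed

end
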